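(* Assume $u_i=1$ for all $i$, $q_1\ge\dots\ge q_n$, and no pool size bound ($G=n$). If $T$ is the regime returned by var-Greedy, then $$\max_{T'\in\tilde{\mathcal T}^B}u(T')\le e\cdot u(T).$$
   Context: Individual $i\in[n]$ is healthy with probability $q_i\in[0,1]$, independently. For $S\subseteq[n]$, $q_S=\prod_{i\in S}q_i$ ($q_\emptyset=1$). A test is a set $t\subseteq[n]$; with unit utilities $u(t)=q_t|t|$. $\tilde{\mathcal T}^B$ is the set of tuples of $B$ pairwise disjoint tests, with welfare $u(T)=\sum_ju(t_j)$. var-Greedy: for $j=1,\dots,B$, start with $t_j=\emptyset$ and repeatedly consider the smallest-index individual $i$ not yet placed in any test; add $i$ to $t_j$ if $u(t_j\cup\{i\})\ge u(t_j)$ (equivalently $q_i\ge |t_j|/(|t_j|+1)$), otherwise close $t_j$ and move to test $j+1$ (also stop if no individuals remain). *)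

theory Defs
  imports Complex_Main
begin

text \<open>Individuals are 1..n, health probabilities q :: nat => real.
  Unit utilities: u(t) = q_t * |t| with q_t = product of q_i over t.\<close>

definition qprod :: "(nat \<Rightarrow> real) \<Rightarrow> nat set \<Rightarrow> real" where
  "qprod q S = (\<Prod>i\<in>S. q i)"

definition util :: "(nat \<Rightarrow> real) \<Rightarrow> nat set \<Rightarrow> real" where
  "util q t = qprod q t * real (card t)"

definition welfare :: "(nat \<Rightarrow> real) \<Rightarrow> nat set list \<Rightarrow> real" where
  "welfare q T = sum_list (map (util q) T)"

definition regimes :: "nat \<Rightarrow> nat \<Rightarrow> nat set list set" where
  "regimes n B = {T. length T = B \<and> (\<forall>j<B. T ! j \<subseteq> {1..n}) \<and>
      (\<forall>j<B. \<forall>k<B. j \<noteq> k \<longrightarrow> T ! j \<inter> T ! k = {})}"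

function grow_test :: "(nat \<Rightarrow> real) \<Rightarrow> nat \<Rightarrow> nat \<Rightarrow> nat set \<Rightarrow> nat set \<times> nat" where
  "grow_test q n i t =
     (if n < i then (t, i)
      else if util q (insert i t) \<ge> util q t then grow_test q n (Suc i) (insert i t)
      else (t, i))"
  by pat_completeness auto
termination by (relation "measure (\<lambda>(q, n, i, t). Suc n - i)") auto

fun greedy_from :: "(nat \<Rightarrow> real) \<Rightarrow> nat \<Rightarrow> nat \<Rightarrow> nat \<Rightarrow> nat set list" where
  "greedy_from q n 0 i = []"
| "greedy_from q n (Suc B) i =
     (let (t, i') = grow_test q n i {} in t # greedy_from q n B i')"

definition var_greedy :: "(nat \<Rightarrow> real) \<Rightarrow> nat \<Rightarrow> nat \<Rightarrow> nat set list" where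
  "var_greedy q n B = greedy_from q n B 1"

end

theory Submission
  imports Defs "HOL-Analysis.Convex"
begin

declare grow_test.simps[simp del]


lemma amgm:
  fixes x :: "nat \<Rightarrow> real"
  assumes "finite S" "S \<noteq> {}" "\<And>i. i \<in> S \<Longrightarrow> x i \<ge> 0"
  shows "real (card S) * (\<Prod>i\<in>S. x i) \<le> (\<Sum>i\<in>S. x i ^ card S)"
proof -
  let ?k = "card S"
  have k: "?k > 0" using assms by (simp add: card_gt_0_iff)
  have P0: "(\<Prod>i\<in>S. x i) \<ge> 0" using assms(3) by (simp add: prod_nonneg)
  have "(\<Sum>i \<in> S. x i ^ ?k / ?k) \<ge> (\<Prod>i \<in> S. x i ^ ?k) powr (1 / ?k)"
    by (rule arith_geom_mean) (use assms in auto)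
  also have "(\<Prod>i \<in> S. x i ^ ?k) = (\<Prod>i \<in> S. x i) ^ ?k" by (simp add: prod_power_distrib)
  also have "((\<Prod>i \<in> S. x i) ^ ?k) powr (1 / ?k) = (\<Prod>i \<in> S. x i)"
  proof (cases "(\<Prod>i \<in> S. x i) = 0")
    case True thus ?thesis using k by simp
  next
    case False
    hence "(\<Prod>i \<in> S. x i) > 0" using P0 by simp
    thus ?thesis using k by (simp add: powr_realpow [symmetric] powr_powr)
  qed
  finally have "(\<Prod>i\<in>S. x i) \<le> (\<Sum>i \<in> S. x i ^ ?k) / ?k" by (simp add: sum_divide_distrib)
  thus ?thesis using k by (simp add: field_simps)
qed

lemma one_plus_pow_le_e: "(1 + 1 / real n) ^ n \<le> exp 1"
proof (cases "n = 0")
  case True thus ?thesis by simp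
next
  case False
  have "(1 + 1 / real n) ^ n \<le> exp (1 / real n) ^ n"
    by (rule power_mono) (auto simp: exp_ge_add_one_self add.commute)
  also have "\<dots> = exp (real n * (1 / real n))" by (rule exp_of_nat_mult[symmetric])
  also have "\<dots> = exp 1" using False by simp
  finally show ?thesis .
qed

lemma lemE:
  fixes z :: real and K :: nat
  assumes "1 \<le> K" "real (K - 1) / real K \<le> z"
  shows "1 \<le> exp 1 * z ^ (K - 1)"
proof (cases "K = 1")
  case True thus ?thesis by simp
next
  case False
  define n where "n = K - 1"
  have n: "n \<ge> 1" "K = n + 1" using assms False n_def by auto
  have z0: "real n / real (n+1) \<le> z" using assms n by simp
  have pos: "0 \<le> real n / real (n+1)" by simp
  have "(real n / real (n+1)) ^ n \<le> z ^ n" by (rule power_mono[OF z0 pos])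
  moreover have "(1 + 1 / real n) ^ n * (real n / real (n+1)) ^ n = 1"
  proof -
    have "real n > 0" using n by simp
    hence "real n + real n * real n \<noteq> 0" by (smt (verit) mult_pos_pos)
    with \<open>real n > 0\<close> have "(1 + 1 / real n) * (real n / real (n+1)) = 1" by (simp add: field_simps)
    thus ?thesis by (metis power_mult_distrib power_one)
  qed
  moreover have "(1 + 1 / real n) ^ n \<le> exp 1" by (rule one_plus_pow_le_e)
  ultimately have "1 \<le> exp 1 * (real n / real (n+1)) ^ n"
    by (metis mult_right_mono zero_le_power pos)
  also have "\<dots> \<le> exp 1 * z ^ n" using \<open>(real n / real (n+1)) ^ n \<le> z ^ n\<close> by simp
  finally show ?thesis using n by simp
qed

lemma pow_diff_le:
  fixes x z :: real
  assumes "0 \<le> z" "z \<le> x" "x \<le> 1"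
  shows "x ^ m - z ^ m \<le> real m * (x - z)"
proof (induction m)
  case 0 thus ?case by simp
next
  case (Suc m)
  have "x ^ Suc m - z ^ Suc m = x * (x ^ m - z ^ m) + z ^ m * (x - z)" by (simp add: algebra_simps)
  also have "\<dots> \<le> 1 * (real m * (x - z)) + 1 * (x - z)"
  proof (rule add_mono)
    have "x ^ m - z ^ m \<ge> 0" using assms by (simp add: power_mono)
    thus "x * (x ^ m - z ^ m) \<le> 1 * (real m * (x - z))"
      using Suc assms by (meson dual_order.trans mult_left_le_one_le mult_le_cancel_right1 order.refl) 
    have "z ^ m \<le> 1" using assms by (simp add: power_le_one)
    thus "z ^ m * (x - z) \<le> 1 * (x - z)" using assms by (simp add: mult_left_le_one_le)
  qed
  finally show ?case by (simp add: algebra_simps)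
qed

lemma e_ge2: "2 \<le> exp (1::real)"
  using exp_ge_add_one_self[of 1] by simp

lemma lemA:
  fixes z :: real and K m :: nat
  assumes "1 \<le> m" "m \<le> K" "real (K - 1) / real K \<le> z" "0 \<le> z" "z \<le> 1"
  shows "z ^ m \<le> z ^ K * (exp 1 - 1 + real K / real m)"
proof -
  have E: "1 \<le> exp 1 * z ^ (K - 1)" using lemE assms by auto
  have "z ^ (K - 1) \<le> z ^ (K - m)" using assms by (intro power_decreasing) auto
  hence "1 \<le> exp 1 * z ^ (K - m)" using E by (smt (verit) exp_gt_zero mult_left_mono)
  hence "z ^ m \<le> z ^ m * (exp 1 * z ^ (K - m))" using assms by (simp add: mult_le_cancel_left1)
  also have "\<dots> = exp 1 * z ^ K" using assms by (simp add: power_add[symmetric] algebra_simps)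
  also have "\<dots> \<le> z ^ K * (exp 1 - 1 + real K / real m)"
  proof -
    have "exp 1 \<le> exp 1 - 1 + real K / real m" using assms by simp
    hence "z ^ K * exp 1 \<le> z ^ K * (exp 1 - 1 + real K / real m)" using assms by (simp add: mult_left_mono)
    thus ?thesis by (simp add: algebra_simps)
  qed
  finally show ?thesis .
qed

lemma lemP:
  fixes z x :: real and K m :: nat
  assumes "1 \<le> K" "real (K - 1) / real K \<le> z" "0 \<le> z" "z \<le> x" "x \<le> 1" "1 \<le> m"
  shows "x ^ m - real K * z ^ K / real m \<le> (exp 1 - 1) * z ^ K + exp 1 * real K * z ^ (K - 1) * (x - z)"
proof -
  have E: "1 \<le> exp 1 * z ^ (K - 1)" using lemE assms by auto
  have KE: "real K * (x - z) \<le> exp 1 * real K * z ^ (K - 1) * (x - z)"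
  proof -
    have "0 \<le> real K * (x - z)" using assms by simp
    hence "real K * (x - z) * 1 \<le> real K * (x - z) * (exp 1 * z ^ (K - 1))"
      using E mult_left_mono by blast
    thus ?thesis by (simp add: algebra_simps)
  qed
  have zK: "0 \<le> z ^ K" using assms by simp
  show ?thesis
  proof (cases "m \<le> K")
    case True
    have "x ^ m \<le> z ^ m + real m * (x - z)" using pow_diff_le[of z x m] assms by simp
    also have "\<dots> \<le> z ^ K * (exp 1 - 1 + real K / real m) + real K * (x - z)"
      using lemA[of m K z] assms True by (intro add_mono) (auto intro: mult_right_mono)
    finally show ?thesis using KE by (simp add: algebra_simps)
  next
    case False
    have "x ^ m \<le> x ^ K" using False assms by (intro power_decreasing) auto
    also have "\<dots> \<le> z ^ K + real K * (x - z)" using pow_diff_le[of z x K] assms by simp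
    finally have 1: "x ^ m \<le> z ^ K + real K * (x - z)" .
    have "z ^ K \<le> (exp 1 - 1) * z ^ K" using e_ge2 zK by (simp add: mult_right_mono algebra_simps)
    moreover have "0 \<le> real K * z ^ K / real m" using zK by simp
    ultimately show ?thesis using 1 KE by linarith
  qed
qed

lemma step_up:
  fixes z :: real
  assumes "real (K - 1) / real K \<le> z" "z \<le> 1" "0 \<le> z" "Suc m \<le> K"
  shows "real m * z ^ m \<le> real (Suc m) * z ^ Suc m"
proof -
  have K: "real K > 0" using assms by simp
  have "real (K - 1) \<le> z * real K" using assms K by (simp add: pos_divide_le_eq)
  hence "real K - 1 \<le> z * real K" using assms by (simp add: of_nat_diff)
  moreover have "(real K - real (Suc m)) * z \<le> real K - real (Suc m)"
  proof -
    have "0 \<le> real K - real (Suc m)" using assms by simp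
    thus ?thesis using assms mult_right_le_one_le by blast
  qed
  ultimately have "real m \<le> real (Suc m) * z" by (simp add: algebra_simps)
  hence "real m * z ^ m \<le> real (Suc m) * z * z ^ m" using assms by (simp add: mult_right_mono)
  thus ?thesis by (simp add: algebra_simps)
qed

lemma inc_le:
  fixes z :: real
  assumes "real (K - 1) / real K \<le> z" "z \<le> 1" "0 \<le> z" "m \<le> K"
  shows "real m * z ^ m \<le> real K * z ^ K"
  using assms(4)
proof (induction m rule: inc_induct)
  case base thus ?case by simp
next
  case (step n)
  have "real n * z ^ n \<le> real (Suc n) * z ^ Suc n" using step_up assms step by auto
  thus ?case using step by linarith
qed

lemma dec_le:
  fixes t :: real
  assumes "0 \<le> t" "t \<le> 1" "t * (real K + 1) \<le> real K" "K \<le> m"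
  shows "real m * t ^ m \<le> real K * t ^ K"
  using assms(4)
proof (induction m rule: dec_induct)
  case base thus ?case by simp
next
  case (step n)
  have "real (n - K) * t \<le> real (n - K)" using assms by (simp add: mult_right_le_one_le)
  hence "(real n - real K) * t \<le> real n - real K" using step by (simp add: of_nat_diff)
  hence "real (Suc n) * t \<le> real n" using assms by (simp add: algebra_simps)
  hence "real (Suc n) * t * t ^ n \<le> real n * t ^ n" using assms by (simp add: mult_right_mono)
  thus ?case using step by (simp add: algebra_simps)
qed

lemma lemM:
  fixes t z :: real
  assumes "0 \<le> t" "t \<le> z" "z \<le> 1" "t * (real K + 1) \<le> real K" "real (K - 1) / real K \<le> z"
  shows "real k * t ^ k \<le> real K * z ^ K"
proof (cases "k \<le> K")
  case True
  have "real k * t ^ k \<le> real k * z ^ k" using assms by (simp add: mult_left_mono power_mono)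
  also have "\<dots> \<le> real K * z ^ K" using inc_le assms True by auto
  finally show ?thesis .
next
  case False
  have "real k * t ^ k \<le> real K * t ^ K" using dec_le[of t K k] assms False by auto
  also have "\<dots> \<le> real K * z ^ K" using assms by (simp add: mult_left_mono power_mono)
  finally show ?thesis .
qed

lemma lemProd:
  fixes f :: "nat \<Rightarrow> real"
  assumes "finite S" "\<And>x. x \<in> S \<Longrightarrow> z \<le> f x" "0 \<le> z"
  shows "z ^ card S + z ^ (card S - 1) * (\<Sum>x\<in>S. f x - z) \<le> (\<Prod>x\<in>S. f x)"
  using assms
proof (induction S rule: finite_induct)
  case empty thus ?case by simp
next
  case (insert a S)
  let ?k = "card S"
  let ?D = "(\<Sum>x\<in>S. f x - z)"
  have IH: "z ^ ?k + z ^ (?k - 1) * ?D \<le> (\<Prod>x\<in>S. f x)" using insert by auto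
  have D: "0 \<le> ?D" using insert by (auto intro: sum_nonneg)
  have fa: "z \<le> f a" using insert by auto
  show ?case
  proof (cases "S = {}")
    case True thus ?thesis by simp
  next
    case False
    hence k: "?k \<ge> 1" using insert by (simp add: Suc_leI card_gt_0_iff)
    have zk: "z ^ ?k = z * z ^ (?k - 1)" using k by (metis Suc_diff_le diff_Suc_1 power_Suc)
    have "z ^ card (insert a S) + z ^ (card (insert a S) - 1) * (\<Sum>x\<in>insert a S. f x - z)
        = z * z ^ ?k + z ^ ?k * (f a - z) + z ^ ?k * ?D" using insert by (simp add: algebra_simps)
    also have "\<dots> \<le> f a * (z ^ ?k + z ^ (?k - 1) * ?D)"
    proof -
      have "0 \<le> (f a - z) * z ^ (?k - 1) * ?D" using fa D insert by simp
      thus ?thesis using zk by (simp add: algebra_simps)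
    qed
    also have "\<dots> \<le> f a * (\<Prod>x\<in>S. f x)"
    proof -
      have "0 \<le> f a" using fa insert.prems by linarith
      thus ?thesis using IH by (intro mult_left_mono) auto
    qed
    finally show ?thesis using insert by simp
  qed
qed





definition Inv :: "(nat \<Rightarrow> real) \<Rightarrow> nat \<Rightarrow> nat \<Rightarrow> bool" where
  "Inv q a i = (a < i \<longrightarrow> 0 < q a \<longrightarrow> 0 < (\<Prod>x\<in>{a..<i}. q x) \<and> real (i - 1 - a) / real (i - a) \<le> q (i - 1))"

lemma util_ivl: "util q {a..<i} = (\<Prod>x\<in>{a..<i}. q x) * real (i - a)"
  by (simp add: util_def qprod_def)

lemma grow_test_props:
  "grow_test q n i t = (t', i') \<Longrightarrow> t = {a..<i} \<Longrightarrow> a \<le> i \<Longrightarrow> i \<le> n + 1 \<Longrightarrow> Inv q a i \<Longrightarrow>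
   t' = {a..<i'} \<and> i \<le> i' \<and> i' \<le> n + 1 \<and> Inv q a i' \<and> (i' \<le> n \<longrightarrow> \<not> util q t' \<le> util q (insert i' t'))"
proof (induction q n i t arbitrary: t' i' rule: grow_test.induct)
  case (1 q n i t)
  show ?case
  proof (cases "n < i")
    case True
    then show ?thesis using 1(2-) by (subst (asm) grow_test.simps) auto
  next
    case nlt: False
    show ?thesis
    proof (cases "util q t \<le> util q (insert i t)")
      case True
      have g: "grow_test q n (Suc i) (insert i t) = (t', i')"
        using 1(2) nlt True by (subst (asm) grow_test.simps) auto
      have ins: "insert i t = {a..<Suc i}" using 1(3,4) by auto
      have inv: "Inv q a (Suc i)"
        unfolding Inv_def
      proof (intro impI)
        assume qa: "0 < q a"
        show "0 < (\<Prod>x\<in>{a..<Suc i}. q x) \<and> real (Suc i - 1 - a) / real (Suc i - a) \<le> q (Suc i - 1)"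
        proof (cases "a = i")
          case True thus ?thesis using qa by simp
        next
          case False
          hence ai: "a < i" using 1(4) by simp
          have P: "0 < (\<Prod>x\<in>{a..<i}. q x)" using 1(6) ai qa unfolding Inv_def by auto
          have u1: "util q t = (\<Prod>x\<in>{a..<i}. q x) * real (i - a)" using 1(3) by (simp add: util_ivl)
          have u2: "util q (insert i t) = (\<Prod>x\<in>{a..<i}. q x) * (q i * real (i - a + 1))"
            using ins 1(4) by (simp add: util_ivl prod.atLeastLessThan_Suc Suc_diff_le algebra_simps)
          have c: "real (i - a) \<le> q i * real (i - a + 1)" using True u1 u2 P by simp
          have d: "real (i - a) / real (i - a + 1) \<le> q i" using c by (simp add: divide_le_eq algebra_simps)
          have pos: "0 < q i"
          proof -
            have "0 < real (i - a)" using ai by simp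
            hence "0 < q i * real (i - a + 1)" using c by linarith
            thus ?thesis by (simp add: zero_less_mult_iff)
          qed
          have "0 < (\<Prod>x\<in>{a..<Suc i}. q x)" using P pos 1(4) by (simp add: prod.atLeastLessThan_Suc)
          moreover have "Suc i - 1 - a = i - a" "Suc i - a = i - a + 1" using 1(4) by auto
          ultimately show ?thesis using d by simp
        qed
      qed
      have "t' = {a..<i'} \<and> Suc i \<le> i' \<and> i' \<le> n + 1 \<and> Inv q a i' \<and> (i' \<le> n \<longrightarrow> \<not> util q t' \<le> util q (insert i' t'))"
        using 1(1)[OF nlt True g ins] 1(4) nlt inv by auto
      thus ?thesis by auto
    next
      case False
      then show ?thesis using 1(2-) nlt by (subst (asm) grow_test.simps) auto
    qed
  qed
qed

fun gend :: "(nat \<Rightarrow> real) \<Rightarrow> nat \<Rightarrow> nat \<Rightarrow> nat \<Rightarrow> nat" where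
  "gend q n 0 i = i"
| "gend q n (Suc B) i = gend q n B (snd (grow_test q n i {}))"

lemma grow_ge: "grow_test q n i t = (t', i') \<Longrightarrow> i \<le> i'"
proof (induction q n i t arbitrary: t' i' rule: grow_test.induct)
  case (1 q n i t)
  show ?case
  proof (cases "\<not> n < i \<and> util q t \<le> util q (insert i t)")
    case True
    hence "grow_test q n (Suc i) (insert i t) = (t', i')" using 1(2) by (subst (asm) grow_test.simps) auto
    thus ?thesis using 1(1) True by fastforce
  next
    case False
    thus ?thesis using 1(2) by (subst (asm) grow_test.simps) (auto split: if_splits)
  qed
qed

lemma gend_ge: "i \<le> gend q n B i"
proof (induction B arbitrary: i)
  case 0 thus ?case by simp
next
  case (Suc B)
  obtain t i' where g: "grow_test q n i {} = (t, i')" by (metis prod.exhaust)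
  have "i \<le> i'" using grow_ge[OF g] .
  thus ?case using Suc[of i'] g by simp
qed





lemma blk_sum:
  assumes qb: "\<forall>i\<in>{1..n}. 0 \<le> q i \<and> q i \<le> 1"
    and mo: "\<forall>i j. 1 \<le> i \<longrightarrow> i \<le> j \<longrightarrow> j \<le> n \<longrightarrow> q j \<le> q i"
    and i: "1 \<le> i" "i < i'" "i' \<le> n + 1" and inv: "Inv q i i'"
  shows "(\<Sum>x\<in>{i..<i'}. q x) \<le> exp 1 * util q {i..<i'}"
proof -
  have mem: "\<And>x. x \<in> {i..<i'} \<Longrightarrow> x \<in> {1..n}" using i by auto
  have le: "\<And>x. x \<in> {i..<i'} \<Longrightarrow> q x \<le> q i" using mo i by auto
  have nn: "\<And>x. x \<in> {i..<i'} \<Longrightarrow> 0 \<le> q x" using qb mem by blast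
  have P0: "0 \<le> (\<Prod>x\<in>{i..<i'}. q x)" by (intro prod_nonneg) (use nn in auto)
  have S: "(\<Sum>x\<in>{i..<i'}. q x) \<le> real (i' - i) * q i"
    using sum_bounded_above[of "{i..<i'}" q "q i"] le by simp
  show ?thesis
  proof (cases "q i = 0")
    case True
    have "(\<Sum>x\<in>{i..<i'}. q x) \<le> 0" using S True by simp
    moreover have "0 \<le> exp 1 * util q {i..<i'}" using P0 by (simp add: util_ivl)
    ultimately show ?thesis by linarith
  next
    case False
    hence qi: "0 < q i" using nn i by (metis atLeastLessThan_iff order_le_less order_refl)
    let ?K = "i' - i"
    let ?z = "q (i' - 1)"
    have zge: "real (?K - 1) / real ?K \<le> ?z" using inv qi i unfolding Inv_def by (simp add: diff_diff_left)
    have z0: "0 \<le> ?z" using nn i by simp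
    have zx: "\<And>x. x \<in> {Suc i..<i'} \<Longrightarrow> ?z \<le> q x" using mo i by auto
    have "(\<Prod>x\<in>{Suc i..<i'}. ?z) \<le> (\<Prod>x\<in>{Suc i..<i'}. q x)"
      by (rule prod_mono) (use zx z0 in auto)
    hence Pz: "?z ^ (?K - 1) \<le> (\<Prod>x\<in>{Suc i..<i'}. q x)" by simp
    have split: "(\<Prod>x\<in>{i..<i'}. q x) = q i * (\<Prod>x\<in>{Suc i..<i'}. q x)"
      using i by (simp add: prod.atLeast_Suc_lessThan)
    have E: "1 \<le> exp 1 * ?z ^ (?K - 1)" using lemE[of ?K ?z] zge i by simp
    have "real ?K * q i \<le> real ?K * q i * (exp 1 * ?z ^ (?K - 1))"
      using mult_left_mono[OF E, of "real ?K * q i"] qi by simp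
    also have "\<dots> \<le> real ?K * q i * (exp 1 * (\<Prod>x\<in>{Suc i..<i'}. q x))"
      using Pz qi by (intro mult_left_mono) auto
    also have "\<dots> = exp 1 * util q {i..<i'}" using split by (simp add: util_ivl algebra_simps)
    finally show ?thesis using S by linarith
  qed
qed

lemma block_step:
  fixes q :: "nat \<Rightarrow> real" and S :: "nat set"
  assumes fin: "finite S" and K: "card S = K" "1 \<le> K"
    and zq: "\<And>x. x \<in> S \<Longrightarrow> z \<le> q x \<and> q x \<le> 1"
    and z: "0 < z" "real (K - 1) / real K \<le> z"
    and sumb: "(\<Sum>x\<in>S. q x) \<le> exp 1 * util q S"
    and b: "0 \<le> \<beta>" "\<beta> \<le> real K * z ^ K"
  shows "\<exists>\<psi>. (\<forall>x\<in>S. 0 \<le> \<psi> x \<and> (\<forall>m. 1 \<le> m \<longrightarrow> q x ^ m - \<beta> / real m \<le> \<psi> x))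
           \<and> (\<Sum>x\<in>S. \<psi> x) + \<beta> \<le> exp 1 * util q S"
proof -
  define c where "c = real K * z ^ K"
  have c0: "0 < c" using z K by (simp add: c_def)
  define l where "l = \<beta> / c"
  have l: "0 \<le> l" "l \<le> 1" using b c0 by (auto simp: l_def c_def)
  have bl: "\<beta> = l * c" using c0 by (simp add: l_def)
  define g where "g x = (exp 1 - 1) * z ^ K + exp 1 * real K * z ^ (K - 1) * (x - z)" for x
  define \<psi> where "\<psi> x = (1 - l) * q x + l * g (q x)" for x
  have e1: "1 \<le> exp (1::real) - 1" using e_ge2 by simp
  have gnn: "\<And>x. x \<in> S \<Longrightarrow> 0 \<le> g (q x)"
  proof -
    fix x assume "x \<in> S"
    hence "0 \<le> q x - z" using zq by auto
    moreover have "0 \<le> (exp 1 - 1) * z ^ K" using e1 z by simp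
    ultimately show "0 \<le> g (q x)" unfolding g_def using z by simp
  qed
  have A: "\<forall>x\<in>S. 0 \<le> \<psi> x \<and> (\<forall>m. 1 \<le> m \<longrightarrow> q x ^ m - \<beta> / real m \<le> \<psi> x)"
  proof (intro ballI conjI allI impI)
    fix x assume x: "x \<in> S"
    have qx: "0 \<le> q x" "q x \<le> 1" "z \<le> q x" using zq[OF x] z by auto
    show "0 \<le> \<psi> x" unfolding \<psi>_def using l qx gnn[OF x] by simp
    fix m :: nat assume m: "1 \<le> m"
    have p1: "q x ^ m \<le> q x" using qx m power_decreasing[of 1 m "q x"] by simp
    have p2: "q x ^ m - c / real m \<le> g (q x)" unfolding g_def c_def
      using lemP[of K z "q x" m] K z qx m by simp
    have "q x ^ m - \<beta> / real m = (1 - l) * q x ^ m + l * (q x ^ m - c / real m)"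
      using bl by (simp add: algebra_simps)
    also have "\<dots> \<le> (1 - l) * q x + l * g (q x)"
      using p1 p2 l by (intro add_mono mult_left_mono) auto
    finally show "q x ^ m - \<beta> / real m \<le> \<psi> x" unfolding \<psi>_def .
  qed
  have Pr: "z ^ K + z ^ (K - 1) * (\<Sum>x\<in>S. q x - z) \<le> (\<Prod>x\<in>S. q x)"
    using lemProd[of S z q] fin zq z K by auto
  have sg: "(\<Sum>x\<in>S. g (q x)) + c = exp 1 * real K * (z ^ K + z ^ (K - 1) * (\<Sum>x\<in>S. q x - z))"
  proof -
    have "(\<Sum>x\<in>S. g (q x)) = (\<Sum>x\<in>S. (exp 1 - 1) * z ^ K) + (\<Sum>x\<in>S. exp 1 * real K * z ^ (K - 1) * (q x - z))"
      by (simp add: g_def sum.distrib)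
    also have "\<dots> = real K * ((exp 1 - 1) * z ^ K) + exp 1 * real K * z ^ (K - 1) * (\<Sum>x\<in>S. q x - z)"
      using K by (simp add: sum_distrib_left)
    finally show ?thesis by (simp add: c_def algebra_simps)
  qed
  have U: "util q S = (\<Prod>x\<in>S. q x) * real K" using K by (simp add: util_def qprod_def)
  have B2: "(\<Sum>x\<in>S. g (q x)) + c \<le> exp 1 * util q S"
    unfolding sg U using Pr K by (simp add: mult_left_mono)
  have "(\<Sum>x\<in>S. \<psi> x) + \<beta> = (1 - l) * (\<Sum>x\<in>S. q x) + l * ((\<Sum>x\<in>S. g (q x)) + c)"
  proof -
    have "(\<Sum>x\<in>S. \<psi> x) = (\<Sum>x\<in>S. (1 - l) * q x) + (\<Sum>x\<in>S. l * g (q x))"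
      by (simp add: \<psi>_def sum.distrib)
    also have "\<dots> = (1 - l) * (\<Sum>x\<in>S. q x) + l * (\<Sum>x\<in>S. g (q x))" by (simp add: sum_distrib_left)
    finally show ?thesis using bl by (simp add: algebra_simps)
  qed
  also have "\<dots> \<le> (1 - l) * (exp 1 * util q S) + l * (exp 1 * util q S)"
    using sumb B2 l by (intro add_mono mult_left_mono) auto
  also have "\<dots> = exp 1 * util q S" by (simp add: algebra_simps)
  finally show ?thesis using A by blast
qed





definition bval :: "(nat \<Rightarrow> real) \<Rightarrow> nat \<Rightarrow> nat \<Rightarrow> real" where
  "bval q n F = (if F \<le> n then Max ((\<lambda>k. real k * q F ^ k) ` {1..n}) else 0)"

lemma greedy_main:
  assumes qb: "\<forall>i\<in>{1..n}. 0 \<le> q i \<and> q i \<le> 1"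
    and mo: "\<forall>i j. 1 \<le> i \<longrightarrow> i \<le> j \<longrightarrow> j \<le> n \<longrightarrow> q j \<le> q i"
  shows "1 \<le> i \<Longrightarrow> i \<le> n + 1 \<Longrightarrow> \<exists>\<alpha>. (\<forall>x\<in>{i..n}. 0 \<le> \<alpha> x \<and>
      (\<forall>m. 1 \<le> m \<longrightarrow> m \<le> n \<longrightarrow> q x ^ m - bval q n (gend q n B i) / real m \<le> \<alpha> x)) \<and>
      (\<Sum>x\<in>{i..n}. \<alpha> x) + real B * bval q n (gend q n B i) \<le> exp 1 * welfare q (greedy_from q n B i)"
proof (induction B arbitrary: i)
  case 0
  have "\<forall>x\<in>{i..n}. 0 \<le> (0::real) \<and>
      (\<forall>m. 1 \<le> m \<longrightarrow> m \<le> n \<longrightarrow> q x ^ m - bval q n i / real m \<le> 0)"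
  proof (intro ballI allI impI conjI)
    fix x m assume x: "x \<in> {i..n}" and m: "1 \<le> m" "m \<le> n"
    have iln: "i \<le> n" using x by simp
    have "real m * q i ^ m \<le> Max ((\<lambda>k. real k * q i ^ k) ` {1..n})"
      using m by (intro Max_ge) auto
    moreover have "q x ^ m \<le> q i ^ m" using x qb mo 0 by (intro power_mono) auto
    ultimately have "real m * q x ^ m \<le> bval q n i"
      using iln unfolding bval_def by (smt (verit) mult_left_mono of_nat_0_le_iff)
    hence "q x ^ m \<le> bval q n i / real m" using m by (simp add: field_simps)
    thus "q x ^ m - bval q n i / real m \<le> 0" by simp
  qed simp
  thus ?case by (intro exI[of _ "\<lambda>_. 0"]) (simp add: welfare_def)
next
  case (Suc B)
  obtain t i' where g: "grow_test q n i {} = (t, i')" by (metis prod.exhaust)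
  have gf: "greedy_from q n (Suc B) i = t # greedy_from q n B i'" using g by simp
  have ge: "gend q n (Suc B) i = gend q n B i'" using g by simp
  define \<beta> where "\<beta> = bval q n (gend q n B i')"
  have W: "welfare q (greedy_from q n (Suc B) i) = util q t + welfare q (greedy_from q n B i')"
    using gf by (simp add: welfare_def)
  show ?case
  proof (cases "n < i")
    case True
    have ti: "t = {}" "i' = i" using g True by (subst (asm) grow_test.simps; simp)+
    have "i \<le> gend q n B i" by (rule gend_ge)
    hence b0: "\<beta> = 0" using True ti by (simp add: \<beta>_def bval_def)
    obtain \<alpha> where a: "(\<forall>x\<in>{i'..n}. 0 \<le> \<alpha> x \<and>
      (\<forall>m. 1 \<le> m \<longrightarrow> m \<le> n \<longrightarrow> q x ^ m - \<beta> / real m \<le> \<alpha> x)) \<and>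
      (\<Sum>x\<in>{i'..n}. \<alpha> x) + real B * \<beta> \<le> exp 1 * welfare q (greedy_from q n B i')"
      using Suc.IH[of i'] Suc.prems ti unfolding \<beta>_def by auto
    have "util q t = 0" using ti by (simp add: util_def)
    thus ?thesis using a ti b0 W ge unfolding \<beta>_def by (intro exI[of _ \<alpha>]) auto
  next
    case False
    hence iln: "i \<le> n" by simp
    have GT: "t = {i..<i'} \<and> i \<le> i' \<and> i' \<le> n + 1 \<and> Inv q i i' \<and> (i' \<le> n \<longrightarrow> \<not> util q t \<le> util q (insert i' t))"
    proof -
      have inv0: "Inv q i i" by (simp add: Inv_def)
      show ?thesis using grow_test_props[OF g _ _ _ inv0] Suc.prems iln by auto
    qed
    hence t: "t = {i..<i'}" and i'le: "i' \<le> n + 1" and inv: "Inv q i i'"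
      and C: "i' \<le> n \<Longrightarrow> \<not> util q t \<le> util q (insert i' t)" by auto
    have ii': "i < i'"
    proof (rule ccontr)
      assume "\<not> i < i'"
      hence "i' = i" using GT by simp
      hence "t = {}" using t by simp
      moreover have "0 \<le> q i" using qb Suc.prems iln by auto
      ultimately show False using C \<open>i' = i\<close> iln by (simp add: util_def qprod_def)
    qed
    obtain \<alpha> where a: "(\<forall>x\<in>{i'..n}. 0 \<le> \<alpha> x \<and>
      (\<forall>m. 1 \<le> m \<longrightarrow> m \<le> n \<longrightarrow> q x ^ m - \<beta> / real m \<le> \<alpha> x)) \<and>
      (\<Sum>x\<in>{i'..n}. \<alpha> x) + real B * \<beta> \<le> exp 1 * welfare q (greedy_from q n B i')"
      using Suc.IH[of i'] Suc.prems ii' i'le unfolding \<beta>_def by auto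
    have sumb: "(\<Sum>x\<in>{i..<i'}. q x) \<le> exp 1 * util q {i..<i'}"
      using blk_sum[OF qb mo] Suc.prems ii' i'le inv by auto
    have inS: "\<And>x. x \<in> {i..<i'} \<Longrightarrow> x \<in> {1..n}" using Suc.prems i'le by auto
    have blk: "\<exists>\<psi>. (\<forall>x\<in>{i..<i'}. 0 \<le> \<psi> x \<and> (\<forall>m. 1 \<le> m \<longrightarrow> q x ^ m - \<beta> / real m \<le> \<psi> x))
           \<and> (\<Sum>x\<in>{i..<i'}. \<psi> x) + \<beta> \<le> exp 1 * util q {i..<i'}"
    proof (cases "gend q n B i' \<le> n")
      case False
      hence b0: "\<beta> = 0" by (simp add: \<beta>_def bval_def)
      show ?thesis
      proof (intro exI[of _ q] conjI ballI allI impI)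
        fix x assume x: "x \<in> {i..<i'}"
        show "0 \<le> q x" using qb inS[OF x] by auto
        fix m :: nat assume m: "1 \<le> m"
        show "q x ^ m - \<beta> / real m \<le> q x" using b0 qb inS[OF x] m power_decreasing[of 1 m "q x"] by auto
      next
        show "(\<Sum>x\<in>{i..<i'}. q x) + \<beta> \<le> exp 1 * util q {i..<i'}" using sumb b0 by simp
      qed
    next
      case True
      define F where "F = gend q n B i'"
      have F: "i' \<le> F" "F \<le> n" using True gend_ge[of i' q n B] by (auto simp: F_def)
      have bF: "\<beta> = Max ((\<lambda>k. real k * q F ^ k) ` {1..n})" using F by (simp add: \<beta>_def bval_def F_def)
      define K where "K = i' - i"
      define z where "z = q (i' - 1)"
      define P where "P = (\<Prod>x\<in>{i..<i'}. q x)"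
      have K1: "1 \<le> K" using ii' by (simp add: K_def)
      have cardS: "card {i..<i'} = K" by (simp add: K_def)
      have P0: "0 \<le> P" unfolding P_def by (intro prod_nonneg) (use qb inS in auto)
      have i'ni: "i' \<notin> t" using t by simp
      have "\<not> util q t \<le> util q (insert i' t)" using C F by simp
      hence CC: "P * real K > P * (q i' * real (K + 1))" using i'ni t
        by (simp add: util_def qprod_def P_def K_def algebra_simps)
      have Ppos: "0 < P" using CC P0 by (smt (verit, best) mult_eq_0_iff)
      have ci: "q i' * real (K + 1) < real K" using CC Ppos by simp
      have zpos: "0 < z"
      proof -
        have "i' - 1 \<in> {i..<i'}" using ii' by auto
        hence "z \<noteq> 0" using Ppos unfolding P_def z_def by (metis finite_atLeastLessThan less_irrefl prod_zero)
        moreover have "0 \<le> z" using qb inS[of "i' - 1"] ii' unfolding z_def by auto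
        ultimately show ?thesis by simp
      qed
      have qi: "0 < q i"
      proof -
        have "i \<in> {i..<i'}" using ii' by auto
        hence "q i \<noteq> 0" using Ppos unfolding P_def by (metis finite_atLeastLessThan less_irrefl prod_zero)
        moreover have "0 \<le> q i" using qb Suc.prems iln by auto
        ultimately show ?thesis by simp
      qed
      have zge: "real (K - 1) / real K \<le> z" using inv qi ii' unfolding Inv_def K_def z_def
        by (simp add: diff_diff_left)
      have zq: "\<And>x. x \<in> {i..<i'} \<Longrightarrow> z \<le> q x \<and> q x \<le> 1"
      proof -
        fix x assume x: "x \<in> {i..<i'}"
        have "z \<le> q x" unfolding z_def using mo x Suc.prems i'le by auto
        thus "z \<le> q x \<and> q x \<le> 1" using qb inS[OF x] by auto
      qed
      have z1: "z \<le> 1" using zq[of i] ii' by auto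
      have th: "0 \<le> q F" "q F \<le> z" "q F \<le> q i'" using qb mo F ii' Suc.prems unfolding z_def by auto
      have thK: "q F * (real K + 1) \<le> real K"
      proof -
        have "q F * (real K + 1) \<le> q i' * (real K + 1)" using th(3) by (rule mult_right_mono) simp
        moreover have "q i' * (real K + 1) < real K" using ci by (simp add: add.commute)
        ultimately show ?thesis by linarith
      qed
      have n1: "1 \<le> n" using F Suc.prems ii' by linarith
      have b1: "\<beta> \<le> real K * z ^ K" unfolding bF
        using lemM[of "q F" z K] th thK zge z1 n1 by (subst Max_le_iff) auto
      have b0: "0 \<le> \<beta>"
      proof -
        have mem: "(\<lambda>k. real k * q F ^ k) 1 \<in> (\<lambda>k. real k * q F ^ k) ` {1..n}" using n1 by (intro imageI) simp
        have "(\<lambda>k. real k * q F ^ k) 1 \<le> \<beta>" unfolding bF by (rule Max_ge[OF _ mem]) simp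
        thus ?thesis using th by simp
      qed
      show ?thesis using block_step[OF _ cardS K1 zq zpos zge sumb b0 b1] by simp
    qed
    then obtain \<psi> where p: "\<forall>x\<in>{i..<i'}. 0 \<le> \<psi> x \<and> (\<forall>m. 1 \<le> m \<longrightarrow> q x ^ m - \<beta> / real m \<le> \<psi> x)"
      and ps: "(\<Sum>x\<in>{i..<i'}. \<psi> x) + \<beta> \<le> exp 1 * util q {i..<i'}" by blast
    define \<gamma> where "\<gamma> x = (if x < i' then \<psi> x else \<alpha> x)" for x
    have un: "{i..n} = {i..<i'} \<union> {i'..n}" using ii' i'le by auto
    have S: "(\<Sum>x\<in>{i..n}. \<gamma> x) = (\<Sum>x\<in>{i..<i'}. \<psi> x) + (\<Sum>x\<in>{i'..n}. \<alpha> x)"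
      unfolding un by (subst sum.union_disjoint) (auto simp: \<gamma>_def)
    have P1: "\<forall>x\<in>{i..n}. 0 \<le> \<gamma> x \<and>
      (\<forall>m. 1 \<le> m \<longrightarrow> m \<le> n \<longrightarrow> q x ^ m - \<beta> / real m \<le> \<gamma> x)"
    proof
      fix x assume "x \<in> {i..n}"
      thus "0 \<le> \<gamma> x \<and> (\<forall>m. 1 \<le> m \<longrightarrow> m \<le> n \<longrightarrow> q x ^ m - \<beta> / real m \<le> \<gamma> x)"
        using p a unfolding \<gamma>_def by (cases "x < i'") auto
    qed
    have "(\<Sum>x\<in>{i..n}. \<gamma> x) + real (Suc B) * \<beta> \<le> exp 1 * welfare q (greedy_from q n (Suc B) i)"
      using S ps a W t by (simp add: algebra_simps)
    thus ?thesis using P1 ge unfolding \<beta>_def by (intro exI[of _ \<gamma>]) auto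
  qed
qed



lemma test_bound:
  assumes qb: "\<forall>i\<in>{1..n}. 0 \<le> q i \<and> q i \<le> 1"
    and a: "\<forall>x\<in>{1..n}. 0 \<le> \<alpha> x \<and> (\<forall>m. 1 \<le> m \<longrightarrow> m \<le> n \<longrightarrow> q x ^ m - \<beta> / real m \<le> \<alpha> x)"
    and b: "0 \<le> \<beta>" and s: "s \<subseteq> {1..n}"
  shows "util q s \<le> (\<Sum>x\<in>s. \<alpha> x) + \<beta>"
proof (cases "s = {}")
  case True thus ?thesis using b by (simp add: util_def)
next
  case False
  have fin: "finite s" using s finite_subset by blast
  let ?k = "card s"
  have k1: "1 \<le> ?k" using fin False by (simp add: Suc_leI card_gt_0_iff)
  have kn: "?k \<le> n" using card_mono[OF _ s] by simp
  have "util q s = real ?k * (\<Prod>x\<in>s. q x)" by (simp add: util_def qprod_def)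
  also have "\<dots> \<le> (\<Sum>x\<in>s. q x ^ ?k)" by (rule amgm) (use fin False qb s in auto)
  also have "\<dots> = (\<Sum>x\<in>s. q x ^ ?k - \<beta> / real ?k) + \<beta>"
    using k1 by (simp add: sum_subtractf)
  also have "\<dots> \<le> (\<Sum>x\<in>s. \<alpha> x) + \<beta>"
    using a s k1 kn by (intro add_mono sum_mono) auto
  finally show ?thesis .
qed

theorem mainTheorem13:
  fixes q :: "nat \<Rightarrow> real" and n B :: nat
  assumes "\<forall>i\<in>{1..n}. 0 \<le> q i \<and> q i \<le> 1"
    and "\<forall>i j. 1 \<le> i \<longrightarrow> i \<le> j \<longrightarrow> j \<le> n \<longrightarrow> q j \<le> q i"
  shows "\<forall>T'\<in>regimes n B. welfare q T' \<le> exp 1 * welfare q (var_greedy q n B)"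
proof
  fix T' assume T': "T' \<in> regimes n B"
  define \<beta> where "\<beta> = bval q n (gend q n B 1)"
  obtain \<alpha> where a: "\<forall>x\<in>{1..n}. 0 \<le> \<alpha> x \<and>
      (\<forall>m. 1 \<le> m \<longrightarrow> m \<le> n \<longrightarrow> q x ^ m - \<beta> / real m \<le> \<alpha> x)"
    and s: "(\<Sum>x\<in>{1..n}. \<alpha> x) + real B * \<beta> \<le> exp 1 * welfare q (greedy_from q n B 1)"
    using greedy_main[OF assms, of 1 B] unfolding \<beta>_def by auto
  have b0: "0 \<le> \<beta>"
  proof (cases "gend q n B 1 \<le> n")
    case True
    define F where "F = gend q n B 1"
    have F: "1 \<le> F" "F \<le> n" using True gend_ge[of 1 q n B] by (auto simp: F_def)
    have mem: "(\<lambda>k. real k * q F ^ k) 1 \<in> (\<lambda>k. real k * q F ^ k) ` {1..n}" using F by (intro imageI) simp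
    have "(\<lambda>k. real k * q F ^ k) 1 \<le> \<beta>" unfolding \<beta>_def bval_def F_def[symmetric]
      using F by (simp only: if_True) (rule Max_ge[OF _ mem], simp)
    moreover have "0 \<le> q F" using assms(1) F by auto
    ultimately show ?thesis by simp
  next
    case False thus ?thesis by (simp add: \<beta>_def bval_def)
  qed
  have len: "length T' = B" and sub: "\<And>j. j < B \<Longrightarrow> T' ! j \<subseteq> {1..n}"
    and dis: "\<And>j k. j < B \<Longrightarrow> k < B \<Longrightarrow> j \<noteq> k \<Longrightarrow> T' ! j \<inter> T' ! k = {}"
    using T' by (auto simp: regimes_def)
  have "welfare q T' = (\<Sum>j<B. util q (T' ! j))"
    unfolding welfare_def using len by (simp add: sum_list_sum_nth atLeast0LessThan)
  also have "\<dots> \<le> (\<Sum>j<B. (\<Sum>x\<in>T' ! j. \<alpha> x) + \<beta>)"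
    using test_bound[OF assms(1) a b0] sub by (intro sum_mono) auto
  also have "\<dots> = (\<Sum>j<B. (\<Sum>x\<in>T' ! j. \<alpha> x)) + real B * \<beta>" by (simp add: sum.distrib)
  also have "(\<Sum>j<B. (\<Sum>x\<in>T' ! j. \<alpha> x)) = (\<Sum>x\<in>(\<Union>j\<in>{..<B}. T' ! j). \<alpha> x)"
    using sub dis by (subst sum.UNION_disjoint) (auto intro: finite_subset)
  also have "\<dots> \<le> (\<Sum>x\<in>{1..n}. \<alpha> x)"
    using sub a by (intro sum_mono2) auto
  finally show "welfare q T' \<le> exp 1 * welfare q (var_greedy q n B)"
    using s unfolding var_greedy_def by linarith
qed

end
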